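(* Let $X, Y, Z$ be uncertain variables on a common set $\Omega$ with finite ranges. Then: (a) $\mathcal{L}_\star(X\rightarrow Y)\geq 0$; (b) $\mathcal{L}_\star(X\rightarrow Y)=0$ if and only if $X$ and $Y$ are unrelated; (c) $\mathcal{L}_\star(X\rightarrow Y)\leq H_0(X)$, with equality if $Y=X$; (d) if $X-Y-Z$ is a Markov chain, then $\mathcal{L}_\star(X\rightarrow Z)\leq \mathcal{L}_\star(X\rightarrow Y)$.
   Context: Let $\Omega$ be a set. An uncertain variable (uv) is a map $X:\Omega\to\mathbb{X}$ into some set; all uvs considered have finite ranges. The range of $X$ is $[\![X]\!]:=\{X(\omega):\omega\in\Omega\}$; the joint range of $X,Y$ is $[\![X,Y]\!]:=\{(X(\omega),Y(\omega)):\omega\in\Omega\}$; the conditional range is $[\![X\mid Y(\omega)=y]\!]:=\{X(\omega):\omega\in\Omega,\ Y(\omega)=y\}$, and similarly $[\![X\mid Z(\omega)=z,Y(\omega)=y]\!]:=\{X(\omega):\omega\in\Omega,\ Z(\omega)=z,\ Y(\omega)=y\}$. Uvs $X$ and $Y$ are unrelated if $[\![X\mid Y(\omega)=y]\!]=[\![X]\!]$ for all $y\in[\![Y]\!]$ and $[\![Y\mid X(\omega)=x]\!]=[\![Y]\!]$ for all $x\in[\![X]\!]$. Uvs $X,Y,Z$ form a Markov chain $X-Y-Z$ if $[\![X\mid Z(\omega)=z,Y(\omega)=y]\!]=[\![X\mid Y(\omega)=y]\!]$ for all $(z,y)\in[\![Z,Y]\!]$. The non-stochastic entropy is $H_0(X):=\log_2|[\![X]\!]|$.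 The non-stochastic brute-force guessing leakage from a uv $U$ to a uv $Y$ is $$\mathcal{L}(U\rightarrow Y):=\log_2\left(\frac{|[\![U]\!]|}{\min_{y\in[\![Y]\!]}|[\![U\mid Y(\omega)=y]\!]|}\right).$$ The maximal non-stochastic brute-force leakage from $X$ to $Y$ is $$\mathcal{L}_\star(X\rightarrow Y):=\sup_{g}\ \mathcal{L}(g\circ X\rightarrow Y),$$ where the supremum ranges over all finite sets $\mathcal{U}$ and all functions $g:[\![X]\!]\to\mathcal{U}$. *)

theory Defs
  imports Complex_Main
begin

text \<open>Uncertain variables are maps from a sample set Omega (a set over a type 'o)
  into some type. Only their values on Omega matter.\<close>

definition uv_range :: "'o set \<Rightarrow> ('o \<Rightarrow> 'x) \<Rightarrow> 'x set" where
  "uv_range \<Omega> X = X ` \<Omega>"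

definition uv_joint_range :: "'o set \<Rightarrow> ('o \<Rightarrow> 'x) \<Rightarrow> ('o \<Rightarrow> 'y) \<Rightarrow> ('x \<times> 'y) set" where
  "uv_joint_range \<Omega> X Y = (\<lambda>\<omega>. (X \<omega>, Y \<omega>)) ` \<Omega>"

definition uv_cond_range :: "'o set \<Rightarrow> ('o \<Rightarrow> 'x) \<Rightarrow> ('o \<Rightarrow> 'y) \<Rightarrow> 'y \<Rightarrow> 'x set" where
  "uv_cond_range \<Omega> X Y y = {X \<omega> | \<omega>. \<omega> \<in> \<Omega> \<and> Y \<omega> = y}"

definition uv_cond_range2 ::
  "'o set \<Rightarrow> ('o \<Rightarrow> 'x) \<Rightarrow> ('o \<Rightarrow> 'z) \<Rightarrow> 'z \<Rightarrow> ('o \<Rightarrow> 'y) \<Rightarrow> 'y \<Rightarrow> 'x set" where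
  "uv_cond_range2 \<Omega> X Z z Y y = {X \<omega> | \<omega>. \<omega> \<in> \<Omega> \<and> Z \<omega> = z \<and> Y \<omega> = y}"

definition unrelated :: "'o set \<Rightarrow> ('o \<Rightarrow> 'x) \<Rightarrow> ('o \<Rightarrow> 'y) \<Rightarrow> bool" where
  "unrelated \<Omega> X Y \<longleftrightarrow>
     (\<forall>y \<in> uv_range \<Omega> Y. uv_cond_range \<Omega> X Y y = uv_range \<Omega> X) \<and>
     (\<forall>x \<in> uv_range \<Omega> X. uv_cond_range \<Omega> Y X x = uv_range \<Omega> Y)"

definition markov_chain :: "'o set \<Rightarrow> ('o \<Rightarrow> 'x) \<Rightarrow> ('o \<Rightarrow> 'y) \<Rightarrow> ('o \<Rightarrow> 'z) \<Rightarrow> bool" where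
  "markov_chain \<Omega> X Y Z \<longleftrightarrow>
     (\<forall>(z, y) \<in> uv_joint_range \<Omega> Z Y. uv_cond_range2 \<Omega> X Z z Y y = uv_cond_range \<Omega> X Y y)"

definition H0 :: "'o set \<Rightarrow> ('o \<Rightarrow> 'x) \<Rightarrow> real" where
  "H0 \<Omega> X = log 2 (card (uv_range \<Omega> X))"

definition guess_leak :: "'o set \<Rightarrow> ('o \<Rightarrow> 'u) \<Rightarrow> ('o \<Rightarrow> 'y) \<Rightarrow> real" where
  "guess_leak \<Omega> U Y =
     log 2 (real (card (uv_range \<Omega> U)) /
            real (Min ((\<lambda>y. card (uv_cond_range \<Omega> U Y y)) ` uv_range \<Omega> Y)))"

text \<open>Every such g is, up to renaming of its (finite) codomain, a function into nat, and
  the leakage only depends on g through the partition of the range of X it induces,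
  so taking nat as codomain loses no generality.\<close>
definition max_leak :: "'o set \<Rightarrow> ('o \<Rightarrow> 'x) \<Rightarrow> ('o \<Rightarrow> 'y) \<Rightarrow> real" where
  "max_leak \<Omega> X Y = (SUP g :: 'x \<Rightarrow> nat. guess_leak \<Omega> (g \<circ> X) Y)"

end

theory Submission
  imports Defs
begin

lemma range_comp: "uv_range \<Omega> (g \<circ> X) = g ` uv_range \<Omega> X"
  by (auto simp: uv_range_def)

lemma cond_comp: "uv_cond_range \<Omega> (g \<circ> X) Y y = g ` uv_cond_range \<Omega> X Y y"
  by (auto simp: uv_cond_range_def)

lemma cond_sub: "uv_cond_range \<Omega> X Y y \<subseteq> uv_range \<Omega> X"
  by (auto simp: uv_cond_range_def uv_range_def)

lemma cond_ne: "y \<in> uv_range \<Omega> Y \<Longrightarrow> uv_cond_range \<Omega> X Y y \<noteq> {}"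
  by (auto simp: uv_cond_range_def uv_range_def)

lemma m_props:
  assumes ne: "\<Omega> \<noteq> {}" and fA: "finite (uv_range \<Omega> X)" and fY: "finite (uv_range \<Omega> Y)"
  defines "M \<equiv> Min ((\<lambda>y. card (uv_cond_range \<Omega> X Y y)) ` uv_range \<Omega> Y)"
  shows "1 \<le> M" "M \<le> card (uv_range \<Omega> X)"
    "\<And>y. y \<in> uv_range \<Omega> Y \<Longrightarrow> M \<le> card (uv_cond_range \<Omega> X Y y)"
    "\<exists>y\<in>uv_range \<Omega> Y. card (uv_cond_range \<Omega> X Y y) = M"
proof -
  have RYne: "uv_range \<Omega> Y \<noteq> {}" using ne by (auto simp: uv_range_def)
  show m_le: "\<And>y. y \<in> uv_range \<Omega> Y \<Longrightarrow> M \<le> card (uv_cond_range \<Omega> X Y y)"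
    unfolding M_def using fY by (auto intro: Min_le)
  show ex: "\<exists>y\<in>uv_range \<Omega> Y. card (uv_cond_range \<Omega> X Y y) = M"
  proof -
    have "M \<in> (\<lambda>y. card (uv_cond_range \<Omega> X Y y)) ` uv_range \<Omega> Y"
      unfolding M_def by (rule Min_in) (use fY RYne in auto)
    then show ?thesis by auto
  qed
  then obtain y where y: "y \<in> uv_range \<Omega> Y" "card (uv_cond_range \<Omega> X Y y) = M" by blast
  have fC: "finite (uv_cond_range \<Omega> X Y y)" using cond_sub fA finite_subset by metis
  show "1 \<le> M" using y cond_ne[OF y(1), of X] fC
    by (metis card_0_eq less_one not_le)
  show "M \<le> card (uv_range \<Omega> X)" using y cond_sub fA card_mono by metis
qed

lemma leak_value:
  assumes ne: "\<Omega> \<noteq> {}" and fA: "finite (uv_range \<Omega> X)" and fY: "finite (uv_range \<Omega> Y)"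
  shows "max_leak \<Omega> X Y = log 2 (real (card (uv_range \<Omega> X)
     - Min ((\<lambda>y. card (uv_cond_range \<Omega> X Y y)) ` uv_range \<Omega> Y) + 1))"
proof -
  define A where "A = uv_range \<Omega> X"
  define RY where "RY = uv_range \<Omega> Y"
  define C where "C = uv_cond_range \<Omega> X Y"
  define m where "m = Min ((\<lambda>y. card (C y)) ` RY)"
  note mp = m_props[OF ne fA fY, folded A_def RY_def C_def, folded m_def]
  have RYne: "RY \<noteq> {}" using ne by (auto simp: RY_def uv_range_def)
  have finRY: "finite RY" using fY RY_def by simp
  have fA': "finite A" using fA A_def by simp
  have CA: "\<And>y. C y \<subseteq> A" unfolding C_def A_def by (rule cond_sub)
  have Cne: "\<And>y. y \<in> RY \<Longrightarrow> C y \<noteq> {}" unfolding C_def RY_def by (rule cond_ne)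
  have finC: "\<And>y. finite (C y)" using CA fA' finite_subset by metis
  define v where "v = log 2 (real (card A - m + 1))"
  have bound: "guess_leak \<Omega> (g \<circ> X) Y \<le> v" for g :: "'b \<Rightarrow> nat"
  proof -
    define k where "k = Min ((\<lambda>y. card (g ` C y)) ` RY)"
    obtain y0 where y0: "y0 \<in> RY" "card (g ` C y0) = k"
    proof -
      have "k \<in> (\<lambda>y. card (g ` C y)) ` RY"
        unfolding k_def by (rule Min_in) (use finRY RYne in auto)
      then show ?thesis using that by auto
    qed
    have k1: "k \<ge> 1" using y0 Cne[OF y0(1)] finC[of y0]
      by (metis card_0_eq finite_imageI image_is_empty less_one not_le)
    have "g ` A \<subseteq> g ` C y0 \<union> g ` (A - C y0)" by blast
    hence c1: "card (g ` A) \<le> card (g ` C y0 \<union> g ` (A - C y0))"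
      by (simp add: card_mono fA' finC)
    have c2: "card (g ` C y0 \<union> g ` (A - C y0)) \<le> card (g ` C y0) + card (g ` (A - C y0))"
      by (rule card_Un_le)
    have c3: "card (g ` (A - C y0)) \<le> card (A - C y0)" using fA' by (simp add: card_image_le)
    have c4: "card (A - C y0) = card A - card (C y0)" using CA finC card_Diff_subset by metis
    have c5: "m \<le> card (C y0)" using mp(3) y0(1) by blast
    have c6: "card (C y0) \<le> card A" using CA fA' card_mono by metis
    have cg: "card (g ` A) \<le> k + (card A - m)" using c1 c2 c3 c4 c5 c6 y0 by linarith
    have gpos: "card (g ` A) > 0" using Cne[OF y0(1)] CA fA'
      by (metis card_gt_0_iff finite_imageI image_is_empty subset_empty)
    have eq: "guess_leak \<Omega> (g \<circ> X) Y = log 2 (real (card (g ` A)) / real k)"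
      by (simp add: guess_leak_def range_comp cond_comp A_def k_def C_def RY_def image_image)
    have "real (card (g ` A)) \<le> real k + real (card A - m)" using cg by linarith
    also have "\<dots> \<le> real k * (real (card A - m) + 1)"
    proof -
      have "1 * real (card A - m) \<le> real k * real (card A - m)"
        by (rule mult_right_mono) (use k1 in auto)
      thus ?thesis by (simp add: distrib_left)
    qed
    finally have "real (card (g ` A)) / real k \<le> real (card A - m + 1)"
      using k1 by (simp add: pos_divide_le_eq algebra_simps)
    then show ?thesis unfolding eq v_def using gpos k1
      by (subst log_le_cancel_iff) auto
  qed
  obtain y1 where y1: "y1 \<in> RY" "card (C y1) = m" using mp(4) by blast
  obtain f :: "'b \<Rightarrow> nat" and n where f: "inj_on f A" using finite_imp_inj_to_nat_seg[OF fA'] by blast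
  define g where "g x = (if x \<in> C y1 then 0 else Suc (f x))" for x
  have gA: "g ` A = insert 0 (Suc ` f ` (A - C y1))"
    using Cne[OF y1(1)] CA[of y1] by (auto simp: g_def)
  have "card (Suc ` f ` (A - C y1)) = card (A - C y1)"
    using f by (simp add: card_image inj_on_diff image_image inj_on_def)
  also have "\<dots> = card A - m" using CA finC card_Diff_subset y1 by metis
  finally have cgA: "card (g ` A) = card A - m + 1" unfolding gA using fA' by simp
  have gC1: "g ` C y1 = {0}" using Cne[OF y1(1)] by (auto simp: g_def)
  have kmin: "Min ((\<lambda>y. card (g ` C y)) ` RY) = 1"
  proof (rule Min_eqI)
    show "finite ((\<lambda>y. card (g ` C y)) ` RY)" using finRY by simp
    have "card (g ` C y1) = 1" using gC1 by simp
    thus "1 \<in> (\<lambda>y. card (g ` C y)) ` RY" using y1(1) by (metis image_eqI)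
    fix z assume "z \<in> (\<lambda>y. card (g ` C y)) ` RY"
    then obtain y where "y \<in> RY" "z = card (g ` C y)" by blast
    then show "1 \<le> z" using Cne[of y] finC[of y]
      by (metis card_0_eq finite_imageI image_is_empty less_one not_le)
  qed
  have ach: "guess_leak \<Omega> (g \<circ> X) Y = v"
    using kmin cgA
    by (simp add: guess_leak_def range_comp cond_comp A_def C_def RY_def image_image v_def)
  have "max_leak \<Omega> X Y = v"
    unfolding max_leak_def
    by (rule cSup_eq_maximum) (use ach bound in auto)
  then show ?thesis unfolding v_def m_def A_def C_def RY_def .
qed


theorem proposition3:
  fixes \<Omega> :: "'o set" and X :: "'o \<Rightarrow> 'x" and Y :: "'o \<Rightarrow> 'y" and Z :: "'o \<Rightarrow> 'z"
  assumes "\<Omega> \<noteq> {}"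
    and "finite (uv_range \<Omega> X)" and "finite (uv_range \<Omega> Y)" and "finite (uv_range \<Omega> Z)"
  shows "max_leak \<Omega> X Y \<ge> 0
      \<and> (max_leak \<Omega> X Y = 0 \<longleftrightarrow> unrelated \<Omega> X Y)
      \<and> max_leak \<Omega> X Y \<le> H0 \<Omega> X
      \<and> max_leak \<Omega> X X = H0 \<Omega> X
      \<and> (markov_chain \<Omega> X Y Z \<longrightarrow> max_leak \<Omega> X Z \<le> max_leak \<Omega> X Y)"
proof -
  note ne = assms(1) and fA = assms(2) and fY = assms(3) and fZ = assms(4)
  define A where "A = uv_range \<Omega> X"
  define mY where "mY = Min ((\<lambda>y. card (uv_cond_range \<Omega> X Y y)) ` uv_range \<Omega> Y)"
  define mZ where "mZ = Min ((\<lambda>y. card (uv_cond_range \<Omega> X Z y)) ` uv_range \<Omega> Z)"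
  define mX where "mX = Min ((\<lambda>y. card (uv_cond_range \<Omega> X X y)) ` uv_range \<Omega> X)"
  have LY: "max_leak \<Omega> X Y = log 2 (real (card A - mY + 1))"
    unfolding A_def mY_def by (rule leak_value[OF ne fA fY])
  have LZ: "max_leak \<Omega> X Z = log 2 (real (card A - mZ + 1))"
    unfolding A_def mZ_def by (rule leak_value[OF ne fA fZ])
  have LX: "max_leak \<Omega> X X = log 2 (real (card A - mX + 1))"
    unfolding A_def mX_def by (rule leak_value[OF ne fA fA])
  note pY = m_props[OF ne fA fY, folded A_def mY_def]
  note pZ = m_props[OF ne fA fZ, folded A_def mZ_def]
  have fA': "finite A" using fA A_def by simp
  have Ane: "A \<noteq> {}" using ne by (auto simp: A_def uv_range_def)
  have cA: "card A \<ge> 1" using fA' Ane by (simp add: Suc_le_eq card_gt_0_iff)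
  have a: "max_leak \<Omega> X Y \<ge> 0" unfolding LY by simp
  have b: "max_leak \<Omega> X Y = 0 \<longleftrightarrow> unrelated \<Omega> X Y"
  proof
    assume "max_leak \<Omega> X Y = 0"
    hence "log 2 (real (card A - mY + 1)) \<le> 0" unfolding LY by simp
    hence "real (card A - mY + 1) \<le> 1" by (subst (asm) log_le_zero_cancel_iff) auto
    hence mYA: "mY = card A" using pY(2) by simp
    have CA: "\<And>y. y \<in> uv_range \<Omega> Y \<Longrightarrow> uv_cond_range \<Omega> X Y y = A"
    proof -
      fix y assume y: "y \<in> uv_range \<Omega> Y"
      show "uv_cond_range \<Omega> X Y y = A"
        using card_subset_eq[OF fA' cond_sub[of \<Omega> X Y y, folded A_def]] pY(3)[OF y] mYA
          card_mono[OF fA' cond_sub[of \<Omega> X Y y, folded A_def]] by linarith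
    qed
    show "unrelated \<Omega> X Y"
      unfolding unrelated_def
    proof (intro conjI ballI)
      fix y assume "y \<in> uv_range \<Omega> Y" thus "uv_cond_range \<Omega> X Y y = uv_range \<Omega> X"
        using CA A_def by simp
    next
      fix x assume x: "x \<in> uv_range \<Omega> X"
      show "uv_cond_range \<Omega> Y X x = uv_range \<Omega> Y"
      proof
        show "uv_cond_range \<Omega> Y X x \<subseteq> uv_range \<Omega> Y" by (rule cond_sub)
        show "uv_range \<Omega> Y \<subseteq> uv_cond_range \<Omega> Y X x"
        proof
          fix y assume y: "y \<in> uv_range \<Omega> Y"
          hence "x \<in> uv_cond_range \<Omega> X Y y" using CA x A_def by simp
          thus "y \<in> uv_cond_range \<Omega> Y X x" by (auto simp: uv_cond_range_def)
        qed
      qed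
    qed
  next
    assume u: "unrelated \<Omega> X Y"
    obtain y where y: "y \<in> uv_range \<Omega> Y" "card (uv_cond_range \<Omega> X Y y) = mY" using pY(4) by blast
    have "uv_cond_range \<Omega> X Y y = A" using u y unfolding unrelated_def A_def by blast
    hence "mY = card A" using y by simp
    thus "max_leak \<Omega> X Y = 0" unfolding LY by simp
  qed
  have c: "max_leak \<Omega> X Y \<le> H0 \<Omega> X"
    unfolding LY H0_def A_def[symmetric] using pY(1) cA
    by (subst log_le_cancel_iff) auto
  have mX1: "mX = 1"
    unfolding mX_def
  proof (rule Min_eqI)
    show "finite ((\<lambda>y. card (uv_cond_range \<Omega> X X y)) ` uv_range \<Omega> X)" using fA by simp
    have s: "\<And>x. x \<in> uv_range \<Omega> X \<Longrightarrow> uv_cond_range \<Omega> X X x = {x}"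
      by (auto simp: uv_cond_range_def uv_range_def)
    obtain x where "x \<in> uv_range \<Omega> X" using Ane A_def by auto
    moreover have "card (uv_cond_range \<Omega> X X x) = 1" using s[OF calculation] by simp
    ultimately show "1 \<in> (\<lambda>y. card (uv_cond_range \<Omega> X X y)) ` uv_range \<Omega> X" by (metis image_eqI)
    fix z assume "z \<in> (\<lambda>y. card (uv_cond_range \<Omega> X X y)) ` uv_range \<Omega> X"
    thus "1 \<le> z" using s by auto
  qed
  have c2: "max_leak \<Omega> X X = H0 \<Omega> X"
    unfolding LX H0_def A_def[symmetric] mX1 using cA by simp
  have d: "markov_chain \<Omega> X Y Z \<longrightarrow> max_leak \<Omega> X Z \<le> max_leak \<Omega> X Y"
  proof
    assume mc: "markov_chain \<Omega> X Y Z"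
    obtain z where z: "z \<in> uv_range \<Omega> Z" "card (uv_cond_range \<Omega> X Z z) = mZ" using pZ(4) by blast
    then obtain \<omega> where w: "\<omega> \<in> \<Omega>" "Z \<omega> = z" by (auto simp: uv_range_def)
    define y where "y = Y \<omega>"
    have jr: "(z, y) \<in> uv_joint_range \<Omega> Z Y" using w y_def by (auto simp: uv_joint_range_def)
    have eq: "uv_cond_range2 \<Omega> X Z z Y y = uv_cond_range \<Omega> X Y y"
      using mc jr unfolding markov_chain_def by auto
    have sub: "uv_cond_range2 \<Omega> X Z z Y y \<subseteq> uv_cond_range \<Omega> X Z z"
      by (auto simp: uv_cond_range2_def uv_cond_range_def)
    have fz: "finite (uv_cond_range \<Omega> X Z z)" using cond_sub fA finite_subset by metis
    have yr: "y \<in> uv_range \<Omega> Y" using w y_def by (auto simp: uv_range_def)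
    have "mY \<le> mZ" using pY(3)[OF yr] card_mono[OF fz sub] eq z(2) by simp
    hence "real (card A - mZ + 1) \<le> real (card A - mY + 1)" by simp
    thus "max_leak \<Omega> X Z \<le> max_leak \<Omega> X Y"
      unfolding LY LZ by (subst log_le_cancel_iff) auto
  qed
  show ?thesis using a b c c2 d by blast
qed

end
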